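(* For every $\epsilon>0$ there exists $n_0$ such that for every $n\ge n_0$ and every composition $\lambda$ of $n$, $\pi(\mathcal{L}(\xi^\lambda_1),\mathcal{U}([0,1]))\le\epsilon$, where $\pi$ is the Lévy–Prokhorov metric on probability measures on $[0,1]$, $\mathcal{L}(\xi^\lambda_1)$ the law of $\xi^\lambda_1$ and $\mathcal{U}([0,1])$ the uniform law.
   Context: A composition $\lambda=(\lambda_1,\dots,\lambda_r)$ of $n$ has descent set $D_\lambda=\{\lambda_1,\dots,\lambda_1+\dots+\lambda_{r-1}\}$; $\Omega_\lambda=\{\sigma\in\mathfrak{S}_n:des(\sigma)=D_\lambda\}$ with $des(\sigma)=\{i:\sigma(i+1)<\sigma(i)\}$. A cell $i\in[1,n]$ is a peak if $i\in D_\lambda\cup\{n\}$ and $i-1\notin D_\lambda$, a valley if $i\notin D_\lambda$ and $i-1\in D_\lambda\cup\{0\}$. The slope $\mathfrak{s}(i)=[x(i),y(i)]$ is the maximal integer subinterval of $[1,n]$ containing $i$ and no peak or valley other than $i$. Let $\sigma_\lambda$ be uniform on $\Omega_\lambda$ and, conditionally on $\sigma_\lambda$, let $\xi^\lambda_1$ be uniform on $[\frac{x(\sigma_\lambda^{-1}(1))-1}{n},\frac{y(\sigma_\lambda^{-1}(1))}{n}]$ (here $\sigma_\lambda^{-1}(1)$ is the position of the letter $1$). *)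

theory Defs
  imports "HOL-Probability.Probability" "HOL-Combinatorics.Permutations"
begin

definition is_composition :: "nat \<Rightarrow> nat list \<Rightarrow> bool" where
  "is_composition n lam \<longleftrightarrow> (\<forall>p \<in> set lam. p > 0) \<and> sum_list lam = n"

definition comp_descents :: "nat list \<Rightarrow> nat set" where
  "comp_descents lam = {sum_list (take k lam) | k. 1 \<le> k \<and> k < length lam}"

definition perm_des :: "nat \<Rightarrow> (nat \<Rightarrow> nat) \<Rightarrow> nat set" where
  "perm_des n \<sigma> = {i. 1 \<le> i \<and> i < n \<and> \<sigma> (Suc i) < \<sigma> i}"

definition Omega :: "nat list \<Rightarrow> (nat \<Rightarrow> nat) set" where
  "Omega lam = {\<sigma>. \<sigma> permutes {1..sum_list lam} \<and>
                    perm_des (sum_list lam) \<sigma> = comp_descents lam}"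

definition is_peak :: "nat list \<Rightarrow> nat \<Rightarrow> bool" where
  "is_peak lam i \<longleftrightarrow> 1 \<le> i \<and> i \<le> sum_list lam \<and>
     i \<in> comp_descents lam \<union> {sum_list lam} \<and> (i - 1) \<notin> comp_descents lam"

definition is_valley :: "nat list \<Rightarrow> nat \<Rightarrow> bool" where
  "is_valley lam i \<longleftrightarrow> 1 \<le> i \<and> i \<le> sum_list lam \<and>
     i \<notin> comp_descents lam \<and> (i - 1) \<in> comp_descents lam \<union> {0}"

definition is_extremum :: "nat list \<Rightarrow> nat \<Rightarrow> bool" where
  "is_extremum lam i \<longleftrightarrow> is_peak lam i \<or> is_valley lam i"

text \<open>Slope [x(i), y(i)]: the maximal integer subinterval of [1,n] containing i
  and no peak or valley other than i.\<close>
definition slope_left :: "nat list \<Rightarrow> nat \<Rightarrow> nat" where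
  "slope_left lam i = (LEAST x. 1 \<le> x \<and> x \<le> i \<and>
       (\<forall>j. x \<le> j \<and> j < i \<longrightarrow> \<not> is_extremum lam j))"

definition slope_right :: "nat list \<Rightarrow> nat \<Rightarrow> nat" where
  "slope_right lam i = (GREATEST y. i \<le> y \<and> y \<le> sum_list lam \<and>
       (\<forall>j. i < j \<and> j \<le> y \<longrightarrow> \<not> is_extremum lam j))"

definition pos_one :: "nat \<Rightarrow> (nat \<Rightarrow> nat) \<Rightarrow> nat" where
  "pos_one n \<sigma> = (THE i. i \<in> {1..n} \<and> \<sigma> i = 1)"

definition xi1_law :: "nat list \<Rightarrow> real measure" where
  "xi1_law lam = (let n = sum_list lam in
     measure_pmf (pmf_of_set (Omega lam)) \<bind>
       (\<lambda>\<sigma>. uniform_measure lborel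
              {(real (slope_left lam (pos_one n \<sigma>)) - 1) / real n ..
                real (slope_right lam (pos_one n \<sigma>)) / real n}))"

definition unif01 :: "real measure" where
  "unif01 = uniform_measure lborel {0..1}"

definition eps_nbhd01 :: "real \<Rightarrow> real set \<Rightarrow> real set" where
  "eps_nbhd01 e A = {x \<in> {0..1}. \<exists>a \<in> A. dist x a < e}"

definition levy_prokhorov01 :: "real measure \<Rightarrow> real measure \<Rightarrow> real" where
  "levy_prokhorov01 \<mu> \<nu> = Inf {e. e > 0 \<and>
      (\<forall>A \<in> sets borel. A \<subseteq> {0..1} \<longrightarrow>
          measure \<mu> A \<le> measure \<nu> (eps_nbhd01 e A) + e \<and>
          measure \<nu> A \<le> measure \<mu> (eps_nbhd01 e A) + e)}"

end

theory Submission
  imports Defs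
begin


lemma sum_list_pos_nat: "xs \<noteq> [] \<Longrightarrow> \<forall>p\<in>set xs. (p::nat) > 0 \<Longrightarrow> sum_list xs > 0"
  by (cases xs) auto

lemma comp_descents_sub:
  assumes "is_composition n lam"
  shows "comp_descents lam \<subseteq> {1..<n}"
proof
  fix d assume "d \<in> comp_descents lam"
  then obtain k where d: "d = sum_list (take k lam)" "1 \<le> k" "k < length lam"
    unfolding comp_descents_def by auto
  have pos: "\<forall>p\<in>set lam. p > 0" "sum_list lam = n" using assms unfolding is_composition_def by auto
  have "take k lam \<noteq> []" using d by auto
  moreover have "\<forall>p\<in>set (take k lam). p > 0" using pos by (auto dest: in_set_takeD)
  ultimately have a: "sum_list (take k lam) > 0" by (rule sum_list_pos_nat)
  have "drop k lam \<noteq> []" using d by auto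
  moreover have "\<forall>p\<in>set (drop k lam). p > 0" using pos by (auto dest: in_set_dropD)
  ultimately have b: "sum_list (drop k lam) > 0" by (rule sum_list_pos_nat)
  have "sum_list (take k lam) + sum_list (drop k lam) = n"
    by (metis append_take_drop_id sum_list_append pos(2))
  thus "d \<in> {1..<n}" using a b d(1) by auto
qed

lemma exists_perm_des:
  "D \<subseteq> {1..<n} \<Longrightarrow> \<exists>\<sigma>. \<sigma> permutes {1..n} \<and> perm_des n \<sigma> = D"
proof (induction n arbitrary: D)
  case 0
  then show ?case by (intro exI[of _ id]) (auto simp: perm_des_def)
next
  case (Suc n)
  have "D - {n} \<subseteq> {1..<n}" using Suc.prems by auto
  then obtain \<sigma> where s: "\<sigma> permutes {1..n}" "perm_des n \<sigma> = D - {n}" using Suc.IH by blast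
  have s1: "\<sigma> permutes {1..Suc n}" using s(1) by (rule permutes_subset) auto
  have img: "\<And>x. x \<in> {1..n} \<Longrightarrow> \<sigma> x \<in> {1..n}" using permutes_in_image[OF s(1)] by blast
  have fix1: "\<sigma> (Suc n) = Suc n" using s(1) by (rule permutes_not_in) auto
  show ?case
  proof (cases "n \<in> D")
    case False
    have "perm_des (Suc n) \<sigma> = D"
    proof (rule set_eqI)
      fix i
      show "i \<in> perm_des (Suc n) \<sigma> \<longleftrightarrow> i \<in> D"
      proof (cases "i = n")
        case True
        then show ?thesis using False fix1 img[of n] by (auto simp: perm_des_def)
      next
        case False
        then have "i \<in> perm_des (Suc n) \<sigma> \<longleftrightarrow> i \<in> perm_des n \<sigma>" by (auto simp: perm_des_def)
        then show ?thesis using s(2) False Suc.prems by auto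
      qed
    qed
    then show ?thesis using s1 by blast
  next
    case True
    then have n1: "n \<ge> 1" using Suc.prems by auto
    define \<rho> where "\<rho> = (\<lambda>v::nat. if v \<in> {1..n} then v+1 else if v = Suc n then 1 else v)"
    have "\<rho> permutes {1..Suc n}"
    proof (rule inj_imp_permutes)
      show "inj_on \<rho> {1..Suc n}" unfolding \<rho>_def by (auto simp: inj_on_def)
      show "\<And>x. x \<in> {1..Suc n} \<Longrightarrow> \<rho> x \<in> {1..Suc n}" unfolding \<rho>_def by auto
      show "\<And>x. x \<notin> {1..Suc n} \<Longrightarrow> \<rho> x = x" unfolding \<rho>_def by auto
    qed simp
    then have p: "\<rho> \<circ> \<sigma> permutes {1..Suc n}" using s1 by (rule permutes_compose[rotated])
    have "perm_des (Suc n) (\<rho> \<circ> \<sigma>) = D"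
    proof (rule set_eqI)
      fix i
      show "i \<in> perm_des (Suc n) (\<rho> \<circ> \<sigma>) \<longleftrightarrow> i \<in> D"
      proof (cases "i = n")
        case True
        then show ?thesis using \<open>n \<in> D\<close> fix1 img[of n] n1 by (auto simp: perm_des_def \<rho>_def)
      next
        case False
        have "i \<in> perm_des (Suc n) (\<rho> \<circ> \<sigma>) \<longleftrightarrow> i \<in> perm_des n \<sigma>"
        proof (cases "1 \<le> i \<and> i < n")
          case True
          then have "\<sigma> i \<in> {1..n}" "\<sigma> (Suc i) \<in> {1..n}" using img by auto
          then show ?thesis using True by (auto simp: perm_des_def \<rho>_def)
        next
          case c: False
          then show ?thesis using False by (auto simp: perm_des_def)
        qed
        then show ?thesis using s(2) False Suc.prems by auto
      qed
    qed
    then show ?thesis using p by blast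
  qed
qed



lemma pos_one:
  assumes "\<sigma> permutes {1..n}" "n \<ge> 1"
  shows "pos_one n \<sigma> \<in> {1..n} \<and> \<sigma> (pos_one n \<sigma>) = 1"
    and "\<And>i. i \<in> {1..n} \<Longrightarrow> \<sigma> i = 1 \<Longrightarrow> i = pos_one n \<sigma>"
proof -
  have ex: "\<exists>!i. i \<in> {1..n} \<and> \<sigma> i = 1"
  proof (rule ex1I[of _ "inv \<sigma> 1"])
    have "inv \<sigma> 1 \<in> {1..n}" using permutes_in_image[OF permutes_inv[OF assms(1)]] assms(2) by auto
    then show "inv \<sigma> 1 \<in> {1..n} \<and> \<sigma> (inv \<sigma> 1) = 1" using permutes_inverses[OF assms(1)] by auto
  next
    fix i assume "i \<in> {1..n} \<and> \<sigma> i = 1"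
    then show "i = inv \<sigma> 1" using permutes_inverses[OF assms(1)] by metis
  qed
  show 1: "pos_one n \<sigma> \<in> {1..n} \<and> \<sigma> (pos_one n \<sigma>) = 1"
    unfolding pos_one_def by (rule theI'[OF ex])
  fix i assume "i \<in> {1..n}" "\<sigma> i = 1"
  then show "i = pos_one n \<sigma>" using ex 1 by blast
qed

lemma Omega_permutes: "\<sigma> \<in> Omega lam \<Longrightarrow> \<sigma> permutes {1..sum_list lam}"
  by (simp add: Omega_def)

lemma Omega_des: "\<sigma> \<in> Omega lam \<Longrightarrow> perm_des (sum_list lam) \<sigma> = comp_descents lam"
  by (simp add: Omega_def)

lemma Omega_finite: "finite (Omega lam)"
  by (rule finite_subset[OF _ finite_permutations[of "{1..sum_list lam}"]]) (auto simp: Omega_def)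

lemma Omega_nonempty:
  assumes "is_composition n lam"
  shows "Omega lam \<noteq> {}"
proof -
  have n: "sum_list lam = n" using assms by (simp add: is_composition_def)
  obtain \<sigma> where "\<sigma> permutes {1..n}" "perm_des n \<sigma> = comp_descents lam"
    using exists_perm_des[OF comp_descents_sub[OF assms]] by blast
  then show ?thesis using n by (auto simp: Omega_def)
qed

lemma pos_one_valley:
  assumes comp: "is_composition n lam" and s: "\<sigma> \<in> Omega lam" and n1: "n \<ge> 1"
  shows "is_valley lam (pos_one n \<sigma>)"
proof -
  have n: "sum_list lam = n" using comp by (simp add: is_composition_def)
  have p: "\<sigma> permutes {1..n}" using Omega_permutes[OF s] n by simp
  have d: "perm_des n \<sigma> = comp_descents lam" using Omega_des[OF s] n by simp
  define v where "v = pos_one n \<sigma>"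
  have v: "v \<in> {1..n}" "\<sigma> v = 1" using pos_one(1)[OF p n1] v_def by auto
  have img: "\<And>x. x \<in> {1..n} \<Longrightarrow> \<sigma> x \<in> {1..n}" using permutes_in_image[OF p] by blast
  have notD: "v \<notin> comp_descents lam"
  proof
    assume "v \<in> comp_descents lam"
    then have "v < n" using comp_descents_sub[OF comp] by auto
    then have "\<sigma> (Suc v) \<in> {1..n}" using img v by auto
    moreover assume "v \<in> comp_descents lam"
    then have "v \<in> perm_des n \<sigma>" using d by simp
    then have "\<sigma> (Suc v) < \<sigma> v" by (simp add: perm_des_def)
    ultimately show False using v by simp
  qed
  have prev: "v - 1 \<in> comp_descents lam \<union> {0}"
  proof (cases "v = 1")
    case False
    then have v2: "v - 1 \<in> {1..n}" "Suc (v - 1) = v" using v by auto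
    have "\<sigma> (v - 1) \<noteq> 1"
    proof
      assume "\<sigma> (v - 1) = 1"
      then have "v - 1 = v" using pos_one(2)[OF p n1] v2 v v_def by metis
      then show False using v2 by simp
    qed
    then have "\<sigma> (v - 1) > 1" using img[OF v2(1)] by auto
    then have "v - 1 \<in> perm_des n \<sigma>" using v2 v by (auto simp: perm_des_def)
    then show ?thesis using d by simp
  qed simp
  show ?thesis unfolding v_def[symmetric] is_valley_def using v notD prev n by auto
qed

lemma peak_props:
  assumes "is_composition n lam" "is_peak lam q"
  shows "1 \<le> q" "q \<le> n" "q < n \<Longrightarrow> q \<in> comp_descents lam" "q - 1 \<notin> comp_descents lam"
  using assms comp_descents_sub[OF assms(1)] by (auto simp: is_peak_def is_composition_def)

lemma peak_between:
  assumes comp: "is_composition n lam" and a: "a \<notin> comp_descents lam"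
    and b: "b \<in> comp_descents lam" and ab: "a \<le> b"
  shows "\<exists>j. a < j \<and> j \<le> b \<and> is_peak lam j"
proof -
  let ?D = "comp_descents lam"
  have n: "sum_list lam = n" using comp by (simp add: is_composition_def)
  have Dsub: "?D \<subseteq> {1..<n}" by (rule comp_descents_sub[OF comp])
  define j where "j = (LEAST j. a \<le> j \<and> j \<in> ?D)"
  have j1: "a \<le> j \<and> j \<in> ?D" unfolding j_def by (rule LeastI[of _ b]) (use ab b in auto)
  have j2: "j \<le> b" unfolding j_def by (rule Least_le) (use ab b in auto)
  have ja: "a < j" using j1 a by (cases "a = j") auto
  have "j - 1 \<notin> ?D"
  proof
    assume "j - 1 \<in> ?D"
    moreover have "a \<le> j - 1" using ja by auto
    ultimately have "j \<le> j - 1" unfolding j_def by (metis (mono_tags, lifting) Least_le)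
    then show False using ja by auto
  qed
  moreover have "j \<in> {1..<n}" using j1 Dsub by auto
  ultimately have "is_peak lam j" using j1 n by (auto simp: is_peak_def)
  then show ?thesis using ja j2 by blast
qed



lemma slope_facts:
  assumes comp: "is_composition n lam" and n2: "n \<ge> 2" and val: "is_valley lam v"
  shows "1 \<le> slope_left lam v" "slope_left lam v \<le> v" "v \<le> slope_right lam v" "slope_right lam v \<le> n"
    and "slope_left lam v \<noteq> 1 \<Longrightarrow> is_peak lam (slope_left lam v - 1)"
    and "slope_right lam v \<noteq> n \<Longrightarrow> is_peak lam (Suc (slope_right lam v))"
    and "\<And>q. is_peak lam q \<Longrightarrow> q < slope_left lam v \<or> slope_right lam v < q"
proof -
  let ?D = "comp_descents lam"
  have nn: "sum_list lam = n" using comp by (simp add: is_composition_def)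
  have v: "1 \<le> v" "v \<le> n" "v \<notin> ?D" "v - 1 \<in> ?D \<union> {0}" using val nn by (auto simp: is_valley_def)
  define P where "P = (\<lambda>x. 1 \<le> x \<and> x \<le> v \<and> (\<forall>j. x \<le> j \<and> j < v \<longrightarrow> \<not> is_extremum lam j))"
  have xdef: "slope_left lam v = Least P" unfolding slope_left_def P_def by simp
  define x where "x = slope_left lam v"
  have Px: "P x" unfolding x_def xdef by (rule LeastI[of _ v]) (use v in \<open>auto simp: P_def\<close>)
  have xmin: "\<And>z. P z \<Longrightarrow> x \<le> z" unfolding x_def xdef by (rule Least_le)
  have x1: "1 \<le> x" and xv: "x \<le> v" using Px by (auto simp: P_def)
  have xnoext: "\<And>j. x \<le> j \<Longrightarrow> j < v \<Longrightarrow> \<not> is_extremum lam j" using Px by (auto simp: P_def)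
  define Q where "Q = (\<lambda>y. v \<le> y \<and> y \<le> sum_list lam \<and> (\<forall>j. v < j \<and> j \<le> y \<longrightarrow> \<not> is_extremum lam j))"
  have ydef: "slope_right lam v = Greatest Q" unfolding slope_right_def Q_def by simp
  define y where "y = slope_right lam v"
  have Qb: "\<forall>z. Q z \<longrightarrow> z \<le> sum_list lam" by (simp add: Q_def)
  have Qy: "Q y" unfolding y_def ydef by (rule GreatestI_nat[of _ v "sum_list lam"]) (use v nn in \<open>auto simp: Q_def\<close>)
  have ymax: "\<And>z. Q z \<Longrightarrow> z \<le> y" unfolding y_def ydef using Qb by (metis Greatest_le_nat)
  have vy: "v \<le> y" and yn: "y \<le> n" using Qy nn by (auto simp: Q_def)
  have ynoext: "\<And>j. v < j \<Longrightarrow> j \<le> y \<Longrightarrow> \<not> is_extremum lam j" using Qy by (auto simp: Q_def)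
  show "1 \<le> slope_left lam v" "slope_left lam v \<le> v" "v \<le> slope_right lam v" "slope_right lam v \<le> n"
    using x1 xv vy yn x_def y_def by auto
  have "x \<noteq> 1 \<Longrightarrow> is_peak lam (x - 1)"
  proof -
    assume x2: "x \<noteq> 1"
    have "\<not> P (x - 1)"
    proof
      assume "P (x - 1)"
      then have "x \<le> x - 1" by (rule xmin)
      then show False using x1 x2 by auto
    qed
    then obtain j where j: "x - 1 \<le> j" "j < v" "is_extremum lam j" using x1 x2 xv by (auto simp: P_def)
    then have jx: "j = x - 1" using xnoext by (cases "x \<le> j") auto
    show "is_peak lam (x - 1)"
    proof (rule ccontr)
      assume np: "\<not> is_peak lam (x - 1)"
      then have vx: "is_valley lam (x - 1)" using j jx by (auto simp: is_extremum_def)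
      then have a: "x - 1 \<notin> ?D" by (simp add: is_valley_def)
      have b: "v - 1 \<in> ?D" using v x1 x2 xv by auto
      have ab: "x - 1 \<le> v - 1" using xv by simp
      obtain q where q: "x - 1 < q" "q \<le> v - 1" "is_peak lam q"
        using peak_between[OF comp a b ab] by blast
      then have "\<not> is_extremum lam q" using xnoext[of q] x2 x1 by auto
      then show False using q by (simp add: is_extremum_def)
    qed
  qed
  then show "slope_left lam v \<noteq> 1 \<Longrightarrow> is_peak lam (slope_left lam v - 1)" using x_def by simp
  have "y \<noteq> n \<Longrightarrow> is_peak lam (Suc y)"
  proof -
    assume y2: "y \<noteq> n"
    have "\<not> Q (Suc y)"
    proof
      assume "Q (Suc y)"
      then have "Suc y \<le> y" by (rule ymax)
      then show False by auto
    qed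
    then obtain j where j: "v < j" "j \<le> Suc y" "is_extremum lam j" using vy yn y2 nn by (auto simp: Q_def)
    then have jy: "j = Suc y" using ynoext by (cases "j \<le> y") auto
    show "is_peak lam (Suc y)"
    proof (rule ccontr)
      assume np: "\<not> is_peak lam (Suc y)"
      then have vx: "is_valley lam (Suc y)" using j jy by (auto simp: is_extremum_def)
      then have b: "y \<in> ?D" using vy v by (auto simp: is_valley_def)
      obtain q where q: "v < q" "q \<le> y" "is_peak lam q"
        using peak_between[OF comp v(3) b vy] by blast
      then have "\<not> is_extremum lam q" using ynoext[of q] by auto
      then show False using q by (simp add: is_extremum_def)
    qed
  qed
  then show "slope_right lam v \<noteq> n \<Longrightarrow> is_peak lam (Suc (slope_right lam v))" using y_def by simp
  fix q assume pq: "is_peak lam q"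
  have "q < x \<or> y < q"
  proof (rule ccontr)
    assume "\<not> (q < x \<or> y < q)"
    then have q: "x \<le> q" "q \<le> y" by auto
    have ext: "is_extremum lam q" using pq by (simp add: is_extremum_def)
    consider "q < v" | "q = v" | "v < q" by linarith
    then show False
    proof cases
      case 1 then show False using xnoext[OF q(1)] ext by auto
    next
      case 2
      then have "v \<in> ?D \<union> {n}" "v - 1 \<notin> ?D" using pq nn by (auto simp: is_peak_def)
      then show False using v n2 by auto
    next
      case 3 then show False using ynoext[OF _ q(2)] ext by auto
    qed
  qed
  then show "q < slope_left lam v \<or> slope_right lam v < q" using x_def y_def by simp
qed



lemma transpose_less:
  assumes "\<not> (a = v \<and> b = Suc v)" "\<not> (a = Suc v \<and> b = v)"
  shows "Transposition.transpose v (Suc v) a < Transposition.transpose v (Suc v) b \<longleftrightarrow> a < b"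
  using assms by (auto simp: Transposition.transpose_def)

lemma swap_step:
  assumes comp: "is_composition n lam" and S: "S \<subseteq> {1..n}"
  and bd1: "\<And>i. 1 \<le> i \<Longrightarrow> i < n \<Longrightarrow> i \<in> S \<Longrightarrow> Suc i \<notin> S \<Longrightarrow> i \<notin> comp_descents lam"
  and bd2: "\<And>i. 1 \<le> i \<Longrightarrow> i < n \<Longrightarrow> i \<notin> S \<Longrightarrow> Suc i \<in> S \<Longrightarrow> i \<in> comp_descents lam"
  and v: "1 \<le> v" "v < n"
  shows "card {\<sigma>\<in>Omega lam. Suc v \<in> \<sigma> ` S} \<le> card {\<sigma>\<in>Omega lam. v \<in> \<sigma> ` S}"
proof -
  have nn: "sum_list lam = n" using comp by (simp add: is_composition_def)
  let ?t = "Transposition.transpose v (Suc v)"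
  define A where "A = {\<sigma>\<in>Omega lam. Suc v \<in> \<sigma> ` S \<and> v \<in> \<sigma> ` S}"
  define B where "B = {\<sigma>\<in>Omega lam. Suc v \<in> \<sigma> ` S \<and> v \<notin> \<sigma> ` S}"
  define B' where "B' = {\<sigma>\<in>Omega lam. v \<in> \<sigma> ` S \<and> Suc v \<notin> \<sigma> ` S}"
  have fin: "finite A" "finite B" "finite B'" unfolding A_def B_def B'_def
    by (auto intro: finite_subset[OF _ Omega_finite])
  have e1: "{\<sigma>\<in>Omega lam. Suc v \<in> \<sigma> ` S} = A \<union> B" "A \<inter> B = {}" unfolding A_def B_def by auto
  have e2: "A \<union> B' \<subseteq> {\<sigma>\<in>Omega lam. v \<in> \<sigma> ` S}" "A \<inter> B' = {}" unfolding A_def B'_def by auto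
  have tperm: "?t permutes {1..n}" using v by (intro permutes_swap_id) auto
  have "card B \<le> card B'"
  proof (rule card_inj_on_le[where f = "\<lambda>\<sigma>. ?t \<circ> \<sigma>"])
    show "inj_on (\<lambda>\<sigma>. ?t \<circ> \<sigma>) B"
    proof (rule inj_onI)
      fix a b assume "?t \<circ> a = ?t \<circ> b"
      then have "?t \<circ> (?t \<circ> a) = ?t \<circ> (?t \<circ> b)" by simp
      then show "a = b" by (simp add: comp_assoc[symmetric])
    qed
    show "finite B'" by (rule fin)
    show "(\<lambda>\<sigma>. ?t \<circ> \<sigma>) ` B \<subseteq> B'"
    proof
      fix \<tau> assume "\<tau> \<in> (\<lambda>\<sigma>. ?t \<circ> \<sigma>) ` B"
      then obtain \<sigma> where \<tau>: "\<tau> = ?t \<circ> \<sigma>" and sB: "\<sigma> \<in> B" by auto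
      have sO: "\<sigma> \<in> Omega lam" and s1: "Suc v \<in> \<sigma> ` S" and s2: "v \<notin> \<sigma> ` S" using sB B_def by auto
      have sp: "\<sigma> permutes {1..n}" using Omega_permutes[OF sO] nn by simp
      have sd: "perm_des n \<sigma> = comp_descents lam" using Omega_des[OF sO] nn by simp
      have inj: "inj \<sigma>" using permutes_inj[OF sp] .
      have tp: "\<tau> permutes {1..n}" unfolding \<tau> by (rule permutes_compose[OF sp tperm])
      have i1: "v \<in> \<tau> ` S"
      proof -
        obtain i where "i \<in> S" "\<sigma> i = Suc v" using s1 by auto
        then show ?thesis unfolding \<tau> by (auto intro!: image_eqI[of _ _ i])
      qed
      have i2: "Suc v \<notin> \<tau> ` S"
      proof
        assume "Suc v \<in> \<tau> ` S"
        then obtain i where i: "i \<in> S" "?t (\<sigma> i) = Suc v" unfolding \<tau> by auto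
        then have "\<sigma> i = v" by (metis transpose_involutory transpose_apply_first)
        then show False using s2 i(1) by auto
      qed
      have "perm_des n \<tau> = perm_des n \<sigma>"
      proof (rule set_eqI)
        fix i
        show "i \<in> perm_des n \<tau> \<longleftrightarrow> i \<in> perm_des n \<sigma>"
        proof (cases "1 \<le> i \<and> i < n")
          case False then show ?thesis unfolding perm_des_def by auto
        next
          case True
          have c1: "\<not> (\<sigma> (Suc i) = v \<and> \<sigma> i = Suc v)"
          proof
            assume h: "\<sigma> (Suc i) = v \<and> \<sigma> i = Suc v"
            obtain j where j: "j \<in> S" "\<sigma> j = Suc v" using s1 by auto
            then have "j = i" using h inj by (metis injD)
            then have iS: "i \<in> S" using j by simp
            have "Suc i \<notin> S" using h s2 by force
            then have "i \<notin> comp_descents lam" using bd1 True iS by auto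
            moreover have "i \<in> perm_des n \<sigma>" using h True by (simp add: perm_des_def)
            ultimately show False using sd by simp
          qed
          have c2: "\<not> (\<sigma> (Suc i) = Suc v \<and> \<sigma> i = v)"
          proof
            assume h: "\<sigma> (Suc i) = Suc v \<and> \<sigma> i = v"
            obtain j where j: "j \<in> S" "\<sigma> j = Suc v" using s1 by auto
            then have "j = Suc i" using h inj by (metis injD)
            then have iS: "Suc i \<in> S" using j by simp
            have "i \<notin> S" using h s2 by force
            then have "i \<in> comp_descents lam" using bd2 True iS by auto
            moreover have "i \<notin> perm_des n \<sigma>" using h True by (simp add: perm_des_def)
            ultimately show False using sd by simp
          qed
          have "?t (\<sigma> (Suc i)) < ?t (\<sigma> i) \<longleftrightarrow> \<sigma> (Suc i) < \<sigma> i"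
            by (rule transpose_less) (use c1 c2 in auto)
          then show ?thesis unfolding \<tau> by (simp add: perm_des_def)
        qed
      qed
      then have "\<tau> \<in> Omega lam" using tp sd nn by (simp add: Omega_def)
      then show "\<tau> \<in> B'" using i1 i2 B'_def by simp
    qed
  qed
  then have "card A + card B \<le> card A + card B'" by simp
  also have "\<dots> = card (A \<union> B')" using fin e2(2) by (simp add: card_Un_disjoint)
  also have "\<dots> \<le> card {\<sigma>\<in>Omega lam. v \<in> \<sigma> ` S}"
    by (rule card_mono[OF _ e2(1)]) (auto intro: finite_subset[OF _ Omega_finite])
  finally show ?thesis using e1 fin by (simp add: card_Un_disjoint)
qed

lemma swap_count:
  assumes comp: "is_composition n lam" and S: "S \<subseteq> {1..n}"
  and bd1: "\<And>i. 1 \<le> i \<Longrightarrow> i < n \<Longrightarrow> i \<in> S \<Longrightarrow> Suc i \<notin> S \<Longrightarrow> i \<notin> comp_descents lam"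
  and bd2: "\<And>i. 1 \<le> i \<Longrightarrow> i < n \<Longrightarrow> i \<notin> S \<Longrightarrow> Suc i \<in> S \<Longrightarrow> i \<in> comp_descents lam"
  shows "card S * card (Omega lam) \<le> n * card {\<sigma>\<in>Omega lam. 1 \<in> \<sigma> ` S}"
proof -
  have nn: "sum_list lam = n" using comp by (simp add: is_composition_def)
  let ?N = "\<lambda>v. card {\<sigma>\<in>Omega lam. v \<in> \<sigma> ` S}"
  have chain: "\<And>v. 1 \<le> v \<Longrightarrow> v \<le> n \<Longrightarrow> ?N v \<le> ?N 1"
  proof -
    fix v :: nat
    show "1 \<le> v \<Longrightarrow> v \<le> n \<Longrightarrow> ?N v \<le> ?N 1"
    proof (induction v)
      case 0 then show ?case by simp
    next
      case (Suc w)
      show ?case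
      proof (cases "w = 0")
        case True then show ?thesis by simp
      next
        case False
        then have "?N (Suc w) \<le> ?N w" using swap_step[OF comp S bd1 bd2, of w] Suc.prems by auto
        also have "\<dots> \<le> ?N 1" using Suc False by auto
        finally show ?thesis .
      qed
    qed
  qed
  have fin: "finite (Omega lam)" by (rule Omega_finite)
  have "(\<Sum>v\<in>{1..n}. ?N v) = (\<Sum>v\<in>{1..n}. \<Sum>\<sigma>\<in>Omega lam. of_bool (v \<in> \<sigma> ` S))"
    using fin by (simp add: Int_def conj_commute)
  also have "\<dots> = (\<Sum>\<sigma>\<in>Omega lam. \<Sum>v\<in>{1..n}. of_bool (v \<in> \<sigma> ` S))"
    by (rule sum.swap)
  also have "\<dots> = (\<Sum>\<sigma>\<in>Omega lam. card S)"
  proof (rule sum.cong[OF refl])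
    fix \<sigma> assume sO: "\<sigma> \<in> Omega lam"
    have sp: "\<sigma> permutes {1..n}" using Omega_permutes[OF sO] nn by simp
    have sub: "\<sigma> ` S \<subseteq> {1..n}" using S permutes_in_image[OF sp] by auto
    have "(\<Sum>v\<in>{1..n}. of_bool (v \<in> \<sigma> ` S)) = card ({1..n} \<inter> {v. v \<in> \<sigma> ` S})" by simp
    also have "{1..n} \<inter> {v. v \<in> \<sigma> ` S} = \<sigma> ` S" using sub by auto
    also have "card (\<sigma> ` S) = card S" by (rule card_image[OF inj_on_subset[OF permutes_inj[OF sp]]]) simp
    finally show "(\<Sum>v\<in>{1..n}. of_bool (v \<in> \<sigma> ` S)) = card S" .
  qed
  also have "\<dots> = card S * card (Omega lam)" by simp
  finally have eq: "(\<Sum>v\<in>{1..n}. ?N v) = card S * card (Omega lam)" .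
  have "(\<Sum>v\<in>{1..n}. ?N v) \<le> (\<Sum>v\<in>{1..n}. ?N 1)" by (rule sum_mono) (use chain in auto)
  also have "\<dots> = n * ?N 1" by simp
  finally show ?thesis using eq by simp
qed



lemma pos_one_in_image:
  assumes comp: "is_composition n lam" and n1: "n \<ge> 1" and sO: "\<sigma> \<in> Omega lam"
  shows "1 \<in> \<sigma> ` T \<longleftrightarrow> pos_one n \<sigma> \<in> T"
proof -
  have nn: "sum_list lam = n" using comp by (simp add: is_composition_def)
  have sp: "\<sigma> permutes {1..n}" using Omega_permutes[OF sO] nn by simp
  have p: "\<sigma> (pos_one n \<sigma>) = 1" using pos_one(1)[OF sp n1] by simp
  show ?thesis
  proof
    assume "1 \<in> \<sigma> ` T"
    then obtain i where "i \<in> T" "\<sigma> i = 1" by auto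
    then have "i = pos_one n \<sigma>" using p permutes_inj[OF sp] by (metis injD)
    then show "pos_one n \<sigma> \<in> T" using \<open>i \<in> T\<close> by simp
  next
    assume "pos_one n \<sigma> \<in> T" then show "1 \<in> \<sigma> ` T" using p by (metis image_eqI)
  qed
qed

lemma peak_bounds:
  assumes comp: "is_composition n lam" and n2: "n \<ge> 2" and pk: "is_peak lam q"
  shows "(q - 1) * card (Omega lam) \<le> n * card {\<sigma>\<in>Omega lam. pos_one n \<sigma> < q}"
    and "(n - q) * card (Omega lam) \<le> n * card {\<sigma>\<in>Omega lam. q < pos_one n \<sigma>}"
    and "card {\<sigma>\<in>Omega lam. pos_one n \<sigma> < q} + card {\<sigma>\<in>Omega lam. q < pos_one n \<sigma>} \<le> card (Omega lam)"
proof -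
  have q: "1 \<le> q" "q \<le> n" "q < n \<Longrightarrow> q \<in> comp_descents lam" "q - 1 \<notin> comp_descents lam"
    using peak_props[OF comp pk] by auto
  have e1: "{\<sigma>\<in>Omega lam. 1 \<in> \<sigma> ` {1..<q}} = {\<sigma>\<in>Omega lam. pos_one n \<sigma> < q}"
  proof -
    { fix \<sigma> assume sO: "\<sigma> \<in> Omega lam"
      have "pos_one n \<sigma> \<ge> 1" using pos_one(1)[OF _ , of \<sigma> n] Omega_permutes[OF sO] comp n2
        by (auto simp: is_composition_def)
      then have "1 \<in> \<sigma> ` {1..<q} \<longleftrightarrow> pos_one n \<sigma> < q"
        using pos_one_in_image[OF comp _ sO, of "{1..<q}"] n2 by auto }
    then show ?thesis by auto
  qed
  have "card {1..<q} * card (Omega lam) \<le> n * card {\<sigma>\<in>Omega lam. 1 \<in> \<sigma> ` {1..<q}}"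
  proof (rule swap_count[OF comp])
    show "{1..<q} \<subseteq> {1..n}" using q by auto
    fix i assume i: "1 \<le> i" "i < n"
    show "i \<in> {1..<q} \<Longrightarrow> Suc i \<notin> {1..<q} \<Longrightarrow> i \<notin> comp_descents lam"
    proof -
      assume "i \<in> {1..<q}" "Suc i \<notin> {1..<q}"
      then have "i = q - 1" by auto
      then show ?thesis using q by simp
    qed
    show "i \<notin> {1..<q} \<Longrightarrow> Suc i \<in> {1..<q} \<Longrightarrow> i \<in> comp_descents lam" using i by auto
  qed
  then show "(q - 1) * card (Omega lam) \<le> n * card {\<sigma>\<in>Omega lam. pos_one n \<sigma> < q}" using e1 by simp
  have e2: "{\<sigma>\<in>Omega lam. 1 \<in> \<sigma> ` {q<..n}} = {\<sigma>\<in>Omega lam. q < pos_one n \<sigma>}"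
  proof -
    { fix \<sigma> assume sO: "\<sigma> \<in> Omega lam"
      have "pos_one n \<sigma> \<le> n" using pos_one(1)[OF _ , of \<sigma> n] Omega_permutes[OF sO] comp n2
        by (auto simp: is_composition_def)
      then have "1 \<in> \<sigma> ` {q<..n} \<longleftrightarrow> q < pos_one n \<sigma>"
        using pos_one_in_image[OF comp _ sO, of "{q<..n}"] n2 by auto }
    then show ?thesis by auto
  qed
  have "card {q<..n} * card (Omega lam) \<le> n * card {\<sigma>\<in>Omega lam. 1 \<in> \<sigma> ` {q<..n}}"
  proof (rule swap_count[OF comp])
    show "{q<..n} \<subseteq> {1..n}" using q by auto
    fix i assume i: "1 \<le> i" "i < n"
    show "i \<in> {q<..n} \<Longrightarrow> Suc i \<notin> {q<..n} \<Longrightarrow> i \<notin> comp_descents lam" using i by auto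
    show "i \<notin> {q<..n} \<Longrightarrow> Suc i \<in> {q<..n} \<Longrightarrow> i \<in> comp_descents lam"
    proof -
      assume "i \<notin> {q<..n}" "Suc i \<in> {q<..n}"
      then have "i = q" "q < n" using i by auto
      then show ?thesis using q by simp
    qed
  qed
  then show "(n - q) * card (Omega lam) \<le> n * card {\<sigma>\<in>Omega lam. q < pos_one n \<sigma>}" using e2 by simp
  have fin: "finite (Omega lam)" by (rule Omega_finite)
  have "card {\<sigma>\<in>Omega lam. pos_one n \<sigma> < q} + card {\<sigma>\<in>Omega lam. q < pos_one n \<sigma>}
      = card ({\<sigma>\<in>Omega lam. pos_one n \<sigma> < q} \<union> {\<sigma>\<in>Omega lam. q < pos_one n \<sigma>})"
    by (rule card_Un_disjoint[symmetric]) (use fin in auto)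
  also have "\<dots> \<le> card (Omega lam)" by (rule card_mono[OF fin]) auto
  finally show "card {\<sigma>\<in>Omega lam. pos_one n \<sigma> < q} + card {\<sigma>\<in>Omega lam. q < pos_one n \<sigma>} \<le> card (Omega lam)" .
qed



lemma final_arith:
  fixes G H N a b \<tau> n c :: real
  assumes n: "n > 0" and N: "N \<ge> 0"
    and Ga: "(a - 1) * N \<le> n * G" "n * G \<le> a * N"
    and Hb: "(n - b) * N \<le> n * H" "n * H \<le> (n - b + 1) * N"
    and ab: "a \<le> \<tau>" "\<tau> < b"
    and c: "c = (if b - 1 \<le> \<tau> then 1 else (\<tau> - a) / (b - 1 - a))"
  shows "\<bar>n * (G + c * (N - G - H)) - N * \<tau>\<bar> \<le> N"
proof -
  have cr: "0 \<le> c" "c \<le> 1" "\<tau> \<le> a + c * (b - a)" "a + c * (b - a) \<le> \<tau> + 1"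
  proof -
    have "0 \<le> c \<and> c \<le> 1 \<and> \<tau> \<le> a + c * (b - a) \<and> a + c * (b - a) \<le> \<tau> + 1"
    proof (cases "b - 1 \<le> \<tau>")
      case True then show ?thesis using c ab by simp
    next
      case False
      then have pos: "b - 1 - a > 0" using ab by simp
      have c': "c = (\<tau> - a) / (b - 1 - a)" using c False by simp
      have "c * (b - 1 - a) = \<tau> - a" using c' pos by simp
      moreover have "c \<le> 1" using c' pos False by (simp add: divide_le_eq)
      moreover have "0 \<le> c" using c' pos ab by simp
      ultimately show ?thesis by (simp add: algebra_simps)
    qed
    then show "0 \<le> c" "c \<le> 1" "\<tau> \<le> a + c * (b - a)" "a + c * (b - a) \<le> \<tau> + 1" by auto
  qed
  have eq: "n * (G + c * (N - G - H)) = (1 - c) * (n * G) + c * (n * N - n * H)" by (simp add: algebra_simps)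
  have u1: "(1 - c) * (n * G) \<le> (1 - c) * (a * N)" using Ga cr by (intro mult_left_mono) auto
  have u2: "c * (n * N - n * H) \<le> c * (b * N)"
    using Hb cr by (intro mult_left_mono) (auto simp: algebra_simps)
  have l1: "(1 - c) * ((a - 1) * N) \<le> (1 - c) * (n * G)" using Ga cr by (intro mult_left_mono) auto
  have l2: "c * ((b - 1) * N) \<le> c * (n * N - n * H)"
    using Hb cr by (intro mult_left_mono) (auto simp: algebra_simps)
  have "(1 - c) * (a * N) + c * (b * N) = N * (a + c * (b - a))" by (simp add: algebra_simps)
  also have "\<dots> \<le> N * (\<tau> + 1)" using cr N by (intro mult_left_mono) auto
  finally have up: "n * (G + c * (N - G - H)) \<le> N * \<tau> + N" using eq u1 u2 by (simp add: algebra_simps)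
  have "N * (\<tau> - 1) \<le> N * (a - 1 + c * (b - a))" using cr N by (intro mult_left_mono) auto
  also have "\<dots> = (1 - c) * ((a - 1) * N) + c * ((b - 1) * N)" by (simp add: algebra_simps)
  finally have lo: "N * \<tau> - N \<le> n * (G + c * (N - G - H))" using eq l1 l2 by (simp add: algebra_simps)
  show ?thesis using up lo by (simp add: abs_le_iff)
qed

definition sl :: "nat list \<Rightarrow> (nat \<Rightarrow> nat) \<Rightarrow> real" where
  "sl lam \<sigma> = (real (slope_left lam (pos_one (sum_list lam) \<sigma>)) - 1) / real (sum_list lam)"
definition sr :: "nat list \<Rightarrow> (nat \<Rightarrow> nat) \<Rightarrow> real" where
  "sr lam \<sigma> = real (slope_right lam (pos_one (sum_list lam) \<sigma>)) / real (sum_list lam)"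

lemma meas_Icc_Int:
  fixes a b t :: real assumes "0 \<le> a"
  shows "measure lborel ({a..b} \<inter> {0..t}) = (if a \<le> min b t then min b t - a else 0)"
proof -
  have eq: "{a..b} \<inter> {0..t} = {a..min b t}" using assms by auto
  show ?thesis unfolding eq by (cases "a \<le> min b t") auto
qed

lemma cdf_bound:
  assumes comp: "is_composition n lam" and n2: "n \<ge> 2" and t: "0 \<le> t" "t \<le> 1"
  shows "\<bar>(\<Sum>\<sigma>\<in>Omega lam. measure lborel ({sl lam \<sigma>..sr lam \<sigma>} \<inter> {0..t}) / measure lborel {sl lam \<sigma>..sr lam \<sigma>})
          - real (card (Omega lam)) * t\<bar> \<le> real (card (Omega lam)) / real n"
proof -
  have nn: "sum_list lam = n" using comp by (simp add: is_composition_def)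
  have npos: "real n > 0" using n2 by simp
  define \<Omega> where "\<Omega> = Omega lam"
  define N where "N = card \<Omega>"
  define \<tau> where "\<tau> = real n * t"
  have tt: "t = \<tau> / real n" using npos by (simp add: \<tau>_def)
  have \<tau>: "0 \<le> \<tau>" "\<tau> \<le> real n" using t npos by (auto simp: \<tau>_def)
  define Q where "Q = {0} \<union> {q. is_peak lam q} \<union> {Suc n}"
  have "{q. is_peak lam q} \<subseteq> {1..n}" using peak_props[OF comp] by auto
  then have Qfin: "finite Q" unfolding Q_def by (auto intro: finite_subset)
  define a where "a = Max {q\<in>Q. real q \<le> \<tau>}"
  define b where "b = Min {q\<in>Q. \<tau> < real q}"
  have fa: "finite {q\<in>Q. real q \<le> \<tau>}" "{q\<in>Q. real q \<le> \<tau>} \<noteq> {}"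
    using Qfin \<tau> by (auto simp: Q_def intro!: exI[of _ 0])
  have fb: "finite {q\<in>Q. \<tau> < real q}" "{q\<in>Q. \<tau> < real q} \<noteq> {}"
    using Qfin \<tau> by (auto simp: Q_def intro!: exI[of _ "Suc n"])
  have a: "a \<in> Q" "real a \<le> \<tau>" using Max_in[OF fa] a_def by auto
  have amax: "\<And>q. q \<in> Q \<Longrightarrow> real q \<le> \<tau> \<Longrightarrow> q \<le> a" using Max_ge[OF fa(1)] a_def by auto
  have b: "b \<in> Q" "\<tau> < real b" using Min_in[OF fb] b_def by auto
  have bmin: "\<And>q. q \<in> Q \<Longrightarrow> \<tau> < real q \<Longrightarrow> b \<le> q" using Min_le[OF fb(1)] b_def by auto
  define c where "c = (if real b - 1 \<le> \<tau> then 1 else (\<tau> - real a) / (real b - 1 - real a))"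
  have per: "measure lborel ({sl lam \<sigma>..sr lam \<sigma>} \<inter> {0..t}) / measure lborel {sl lam \<sigma>..sr lam \<sigma>}
        = (if pos_one n \<sigma> < a then 1 else if b < pos_one n \<sigma> then 0 else c)" if sO: "\<sigma> \<in> \<Omega>" for \<sigma>
  proof -
    define v where "v = pos_one n \<sigma>"
    have val: "is_valley lam v" using pos_one_valley[OF comp] sO n2 by (simp add: v_def \<Omega>_def)
    define x where "x = slope_left lam v"
    define y where "y = slope_right lam v"
    note sf = slope_facts[OF comp n2 val, folded x_def y_def]
    have slx: "sl lam \<sigma> = (real x - 1) / real n" by (simp add: sl_def nn x_def v_def)
    have sry: "sr lam \<sigma> = real y / real n" by (simp add: sr_def nn y_def v_def)
    have xy: "1 \<le> x" "x \<le> v" "v \<le> y" "y \<le> n" using sf by auto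
    have x1Q: "x - 1 \<in> Q" using sf(5) by (cases "x = 1") (auto simp: Q_def)
    have y1Q: "Suc y \<in> Q" using sf(6) by (cases "y = n") (auto simp: Q_def)
    have noQ: "\<And>q. q \<in> Q \<Longrightarrow> q < x \<or> y < q" using sf(7) xy by (auto simp: Q_def)
    have al: "0 \<le> (real x - 1) / real n" using xy npos by simp
    have len: "measure lborel {sl lam \<sigma>..sr lam \<sigma>} = (real y - real x + 1) / real n"
      unfolding slx sry using xy npos by (subst measure_lborel_Icc) (auto simp: divide_simps)
    have lenpos: "(real y - real x + 1) / real n > 0" using xy npos by simp
    have ne: "real y - real x + 1 \<noteq> 0" using xy by simp
    show ?thesis
    proof (cases "v < a")
      case True
      have "y < a" using noQ[OF a(1)] True xy by auto
      then have "real y \<le> \<tau>" using a by simp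
      then have "real y / real n \<le> t" unfolding tt using npos by (simp add: divide_right_mono)
      then have "measure lborel ({sl lam \<sigma>..sr lam \<sigma>} \<inter> {0..t}) = (real y - real x + 1) / real n"
        unfolding slx sry using al xy npos by (subst meas_Icc_Int) (auto simp: divide_simps)
      then show ?thesis using True len lenpos n2 ne by (simp add: v_def)
    next
      case na: False
      show ?thesis
      proof (cases "b < v")
        case True
        have "b < x" using noQ[OF b(1)] True xy by auto
        then have "\<tau> < real x - 1" using b by simp
        then have "t < (real x - 1) / real n" unfolding tt using npos by (simp add: divide_strict_right_mono)
        then have "measure lborel ({sl lam \<sigma>..sr lam \<sigma>} \<inter> {0..t}) = 0"
          unfolding slx using al by (subst meas_Icc_Int) auto
        then show ?thesis using True na by (simp add: v_def)
      next
        case nb: False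
        have av: "a < v" using na noQ[OF a(1)] xy by (cases "a = v") auto
        have bv: "v < b" using nb noQ[OF b(1)] xy by (cases "b = v") auto
        have "real (x - 1) \<le> \<tau>"
        proof (rule ccontr)
          assume "\<not> real (x - 1) \<le> \<tau>"
          then have "b \<le> x - 1" using bmin[OF x1Q] by simp
          then show False using bv xy by simp
        qed
        then have "x - 1 \<le> a" using amax[OF x1Q] by simp
        moreover have "a < x" using noQ[OF a(1)] av xy by auto
        ultimately have ax: "x = Suc a" by simp
        have "\<tau> < real (Suc y)"
        proof (rule ccontr)
          assume "\<not> \<tau> < real (Suc y)"
          then have "Suc y \<le> a" using amax[OF y1Q] by simp
          then show False using av xy by simp
        qed
        then have "b \<le> Suc y" using bmin[OF y1Q] by simp
        moreover have "y < b" using noQ[OF b(1)] bv xy by auto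
        ultimately have yb: "Suc y = b" by simp
        have ra: "real x - 1 = real a" using ax by simp
        have rb: "real y = real b - 1" using yb by (simp add: of_nat_diff[symmetric])
        have altau: "real a \<le> \<tau>" by (rule a(2))
        have xley: "real a < real b - 1" using ax yb xy by simp
        show ?thesis
        proof (cases "real b - 1 \<le> \<tau>")
          case True
          then have "real y / real n \<le> t" unfolding tt rb using npos by (simp add: divide_right_mono)
          then have "measure lborel ({sl lam \<sigma>..sr lam \<sigma>} \<inter> {0..t}) = (real y - real x + 1) / real n"
            unfolding slx sry using al xy npos by (subst meas_Icc_Int) (auto simp: divide_simps)
          then show ?thesis using True na nb len lenpos n2 ne by (simp add: v_def c_def)
        next
          case False
          then have tl: "t < real y / real n" unfolding tt rb using npos by (simp add: divide_strict_right_mono)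
          have at: "(real x - 1) / real n \<le> t" unfolding tt ra using altau npos by (simp add: divide_right_mono)
          have "measure lborel ({sl lam \<sigma>..sr lam \<sigma>} \<inter> {0..t}) = t - (real x - 1) / real n"
            unfolding slx sry using al tl at by (subst meas_Icc_Int) auto
          also have "\<dots> = (\<tau> - real a) / real n" unfolding tt ra using npos by (simp add: divide_simps)
          finally have m: "measure lborel ({sl lam \<sigma>..sr lam \<sigma>} \<inter> {0..t}) = (\<tau> - real a) / real n" .
          have len': "measure lborel {sl lam \<sigma>..sr lam \<sigma>} = (real b - 1 - real a) / real n"
            using len ra rb by (simp add: algebra_simps)
          have "(\<tau> - real a) / real n / ((real b - 1 - real a) / real n) = (\<tau> - real a) / (real b - 1 - real a)"
            using npos by (simp add: divide_simps)
          then show ?thesis using m len' False na nb by (simp add: v_def c_def)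
        qed
      qed
    qed
  qed
  define G where "G = card {\<sigma>\<in>\<Omega>. pos_one n \<sigma> < a}"
  define H where "H = card {\<sigma>\<in>\<Omega>. b < pos_one n \<sigma>}"
  have finO: "finite \<Omega>" unfolding \<Omega>_def by (rule Omega_finite)
  have ab: "a < b" using a(2) b(2) by simp
  have "(\<Sum>\<sigma>\<in>\<Omega>. measure lborel ({sl lam \<sigma>..sr lam \<sigma>} \<inter> {0..t}) / measure lborel {sl lam \<sigma>..sr lam \<sigma>})
      = (\<Sum>\<sigma>\<in>\<Omega>. of_bool (pos_one n \<sigma> < a) + c * (1 - of_bool (pos_one n \<sigma> < a) - of_bool (b < pos_one n \<sigma>)))"
  proof (rule sum.cong[OF refl])
    fix \<sigma> assume "\<sigma> \<in> \<Omega>"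
    then show "measure lborel ({sl lam \<sigma>..sr lam \<sigma>} \<inter> {0..t}) / measure lborel {sl lam \<sigma>..sr lam \<sigma>}
      = of_bool (pos_one n \<sigma> < a) + c * (1 - of_bool (pos_one n \<sigma> < a) - of_bool (b < pos_one n \<sigma>))"
      using per ab by auto
  qed
  also have "\<dots> = real G + c * (real N - real G - real H)"
    using finO by (simp add: sum.distrib sum_subtractf sum_distrib_left[symmetric] G_def H_def N_def Collect_conj_eq Int_commute)
  finally have S: "(\<Sum>\<sigma>\<in>\<Omega>. measure lborel ({sl lam \<sigma>..sr lam \<sigma>} \<inter> {0..t}) / measure lborel {sl lam \<sigma>..sr lam \<sigma>})
      = real G + c * (real N - real G - real H)" .
  have Ga: "(real a - 1) * real N \<le> real n * real G \<and> real n * real G \<le> real a * real N"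
  proof (cases "a = 0")
    case True
    then have "G = 0" by (simp add: G_def)
    then show ?thesis using True by simp
  next
    case False
    then have pk: "is_peak lam a" using a \<tau> by (auto simp: Q_def)
    note pb = peak_bounds[OF comp n2 pk, folded \<Omega>_def]
    have h1: "real ((a - 1) * N) \<le> real (n * G)" using pb(1) unfolding G_def N_def by (simp only: of_nat_le_iff)
    have h2: "real ((n - a) * N) \<le> real (n * card {\<sigma> \<in> \<Omega>. a < pos_one n \<sigma>})"
      using pb(2) unfolding N_def by (simp only: of_nat_le_iff)
    have h3: "real G + real (card {\<sigma> \<in> \<Omega>. a < pos_one n \<sigma>}) \<le> real N"
      using pb(3) unfolding G_def N_def by (simp flip: of_nat_add)
    have an: "a \<le> n" using peak_props[OF comp pk] by simp
    have "real n * real G \<le> real n * (real N - real (card {\<sigma> \<in> \<Omega>. a < pos_one n \<sigma>}))"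
      using h3 npos by (intro mult_left_mono) auto
    also have "\<dots> \<le> real a * real N" using h2 an by (simp add: of_nat_diff algebra_simps)
    finally show ?thesis using h1 False by (simp add: of_nat_diff)
  qed
  have Hb: "(real n - real b) * real N \<le> real n * real H \<and> real n * real H \<le> (real n - real b + 1) * real N"
  proof (cases "b = Suc n")
    case True
    have "H = 0" unfolding H_def True
    proof -
      have "{\<sigma> \<in> \<Omega>. Suc n < pos_one n \<sigma>} = {}"
      proof (safe)
        fix \<sigma> assume "\<sigma> \<in> \<Omega>" "Suc n < pos_one n \<sigma>"
        moreover have "pos_one n \<sigma> \<le> n" using \<open>\<sigma> \<in> \<Omega>\<close> pos_one(1)[OF Omega_permutes, of \<sigma> lam] nn n2
          by (auto simp: \<Omega>_def)
        ultimately show "\<sigma> \<in> {}" by simp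
      qed
      then show "card {\<sigma> \<in> \<Omega>. Suc n < pos_one n \<sigma>} = 0" by (simp only: card.empty)
    qed
    then show ?thesis using True by simp
  next
    case False
    then have pk: "is_peak lam b" using b \<tau> by (auto simp: Q_def)
    note pb = peak_bounds[OF comp n2 pk, folded \<Omega>_def]
    have bn: "b \<le> n" "1 \<le> b" using peak_props[OF comp pk] by auto
    have h1: "real ((n - b) * N) \<le> real (n * H)" using pb(2) unfolding H_def N_def by (simp only: of_nat_le_iff)
    have h2: "real ((b - 1) * N) \<le> real (n * card {\<sigma> \<in> \<Omega>. pos_one n \<sigma> < b})"
      using pb(1) unfolding N_def by (simp only: of_nat_le_iff)
    have h3: "real (card {\<sigma> \<in> \<Omega>. pos_one n \<sigma> < b}) + real H \<le> real N"
      using pb(3) unfolding H_def N_def by (simp flip: of_nat_add)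
    have "real n * real H \<le> real n * (real N - real (card {\<sigma> \<in> \<Omega>. pos_one n \<sigma> < b}))"
      using h3 npos by (intro mult_left_mono) auto
    also have "\<dots> \<le> (real n - real b + 1) * real N" using h2 bn by (simp add: of_nat_diff algebra_simps)
    finally show ?thesis using h1 bn by (simp add: of_nat_diff)
  qed
  have fin: "\<bar>real n * (real G + c * (real N - real G - real H)) - real N * \<tau>\<bar> \<le> real N"
    by (rule final_arith[OF npos _ conjunct1[OF Ga] conjunct2[OF Ga] conjunct1[OF Hb] conjunct2[OF Hb] a(2) b(2) c_def]) simp
  have "\<bar>real G + c * (real N - real G - real H) - real N * t\<bar> = \<bar>real n * (real G + c * (real N - real G - real H)) - real N * \<tau>\<bar> / real n"
    unfolding tt using npos by (simp add: divide_simps abs_divide[symmetric] abs_mult algebra_simps)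
  also have "\<dots> \<le> real N / real n" using fin npos by (simp add: divide_right_mono)
  finally show ?thesis using S unfolding \<Omega>_def N_def by simp
qed



lemma xi1_law_alt:
  "xi1_law lam = measure_pmf (pmf_of_set (Omega lam)) \<bind> (\<lambda>\<sigma>. uniform_measure lborel {sl lam \<sigma>..sr lam \<sigma>})"
  unfolding xi1_law_def Let_def sl_def sr_def by simp

lemma subprob_uniform_Icc: "subprob_space (uniform_measure lborel {a..b::real})"
proof (cases "a < b")
  case True
  then show ?thesis by (intro prob_space_imp_subprob_space prob_space_uniform_measure) auto
next
  case False
  then have "emeasure lborel {a..b} = 0" by (cases "a = b") auto
  then show ?thesis by (intro subprob_spaceI) auto
qed

lemma kernel_meas:
  "(\<lambda>\<sigma>. uniform_measure lborel {sl lam \<sigma>..sr lam \<sigma>}) \<in> measurable (measure_pmf p) (subprob_algebra lborel)"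
  by (auto simp: space_subprob_algebra subprob_uniform_Icc)

lemma xi1_subprob: "subprob_space (xi1_law lam)"
  unfolding xi1_law_alt by (rule subprob_space_bind[OF _ kernel_meas]) (rule measure_pmf.subprob_space_axioms)

lemma xi1_sets: "sets (xi1_law lam) = sets borel"
  unfolding xi1_law_alt by (subst sets_bind[where N=lborel]) auto

lemma sl_sr:
  assumes comp: "is_composition n lam" and n2: "n \<ge> 2" and sO: "\<sigma> \<in> Omega lam"
  shows "0 \<le> sl lam \<sigma>" "sl lam \<sigma> < sr lam \<sigma>" "sr lam \<sigma> \<le> 1"
proof -
  have nn: "sum_list lam = n" using comp by (simp add: is_composition_def)
  have val: "is_valley lam (pos_one n \<sigma>)" using pos_one_valley[OF comp sO] n2 by simp
  note sf = slope_facts[OF comp n2 val]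
  have npos: "real n > 0" using n2 by simp
  show "0 \<le> sl lam \<sigma>" using sf(1) npos by (simp add: sl_def nn)
  show "sl lam \<sigma> < sr lam \<sigma>" using sf(1-3) npos by (simp add: sl_def sr_def nn divide_strict_right_mono)
  show "sr lam \<sigma> \<le> 1" using sf(4) npos by (simp add: sr_def nn)
qed

lemma xi1_measure:
  assumes comp: "is_composition n lam" and n2: "n \<ge> 2" and X: "X \<in> sets borel"
  shows "measure (xi1_law lam) X =
    (\<Sum>\<sigma>\<in>Omega lam. measure lborel ({sl lam \<sigma>..sr lam \<sigma>} \<inter> X) / measure lborel {sl lam \<sigma>..sr lam \<sigma>}) / real (card (Omega lam))"
proof -
  have ne: "Omega lam \<noteq> {}" by (rule Omega_nonempty[OF comp])
  have fin: "finite (Omega lam)" by (rule Omega_finite)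
  have X': "X \<in> sets lborel" using X by simp
  have "measure (xi1_law lam) X = (\<integral>\<sigma>. measure (uniform_measure lborel {sl lam \<sigma>..sr lam \<sigma>}) X \<partial>measure_pmf (pmf_of_set (Omega lam)))"
    unfolding xi1_law_alt by (rule measure_pmf.measure_bind[OF kernel_meas X'])
  also have "\<dots> = (\<Sum>\<sigma>\<in>Omega lam. measure (uniform_measure lborel {sl lam \<sigma>..sr lam \<sigma>}) X) / real (card (Omega lam))"
    by (rule integral_pmf_of_set[OF ne fin])
  also have "(\<Sum>\<sigma>\<in>Omega lam. measure (uniform_measure lborel {sl lam \<sigma>..sr lam \<sigma>}) X)
      = (\<Sum>\<sigma>\<in>Omega lam. measure lborel ({sl lam \<sigma>..sr lam \<sigma>} \<inter> X) / measure lborel {sl lam \<sigma>..sr lam \<sigma>})"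
  proof (rule sum.cong[OF refl])
    fix \<sigma> assume sO: "\<sigma> \<in> Omega lam"
    note s = sl_sr[OF comp n2 sO]
    show "measure (uniform_measure lborel {sl lam \<sigma>..sr lam \<sigma>}) X
      = measure lborel ({sl lam \<sigma>..sr lam \<sigma>} \<inter> X) / measure lborel {sl lam \<sigma>..sr lam \<sigma>}"
      by (rule measure_uniform_measure) (use s X' in auto)
  qed
  finally show ?thesis .
qed

lemma xi1_cdf:
  assumes comp: "is_composition n lam" and n2: "n \<ge> 2" and t: "0 \<le> t" "t \<le> 1"
  shows "\<bar>measure (xi1_law lam) {0..t} - t\<bar> \<le> 1 / real n"
proof -
  have ne: "Omega lam \<noteq> {}" by (rule Omega_nonempty[OF comp])
  have fin: "finite (Omega lam)" by (rule Omega_finite)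
  have Npos: "real (card (Omega lam)) > 0" using ne fin by (simp add: card_gt_0_iff)
  note cb = cdf_bound[OF comp n2 t]
  define S where "S = (\<Sum>\<sigma>\<in>Omega lam. measure lborel ({sl lam \<sigma>..sr lam \<sigma>} \<inter> {0..t}) / measure lborel {sl lam \<sigma>..sr lam \<sigma>})"
  have m: "measure (xi1_law lam) {0..t} = S / real (card (Omega lam))"
    unfolding S_def by (rule xi1_measure[OF comp n2]) simp
  have "\<bar>S / real (card (Omega lam)) - t\<bar> = \<bar>S - real (card (Omega lam)) * t\<bar> / real (card (Omega lam))"
    using Npos by (simp add: divide_simps abs_divide[symmetric] mult.commute)
  also have "\<dots> \<le> (real (card (Omega lam)) / real n) / real (card (Omega lam))"
  proof -
    have "\<bar>S - real (card (Omega lam)) * t\<bar> \<le> real (card (Omega lam)) / real n" using cb unfolding S_def .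
    then show ?thesis using Npos by (intro divide_right_mono) auto
  qed
  also have "\<dots> = 1 / real n" using Npos by simp
  finally show ?thesis using m by simp
qed

lemma unif01_prob: "prob_space unif01"
  unfolding unif01_def by (rule prob_space_uniform_measure) auto

lemma unif01_sets: "sets unif01 = sets borel"
  unfolding unif01_def by simp

lemma unif01_measure: "X \<in> sets borel \<Longrightarrow> measure unif01 X = measure lborel ({0..1} \<inter> X)"
  unfolding unif01_def by (subst measure_uniform_measure) auto



lemma eps_nbhd_borel: "eps_nbhd01 e A \<in> sets borel"
proof -
  have "eps_nbhd01 e A = {0..1} \<inter> (\<Union>a\<in>A. ball a e)"
    by (auto simp: eps_nbhd01_def dist_commute)
  moreover have "open (\<Union>a\<in>A. ball a e)" by auto
  ultimately show ?thesis by (metis borel_open borel_closed closed_atLeastAtMost sets.Int)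
qed

lemma lp_from_blocks:
  fixes M U :: "real measure"
  assumes fM: "finite_measure M" and fU: "finite_measure U"
    and sM: "sets M = sets borel" and sU: "sets U = sets borel"
    and e: "0 < e" and m: "1 \<le> m" and hm: "1 / real m < e" and d0: "0 \<le> d" and dlt: "2 * real m * d \<le> e"
    and cdfM: "\<And>j. 1 \<le> j \<Longrightarrow> j \<le> m \<Longrightarrow> \<bar>measure M {0..real j / real m} - real j / real m\<bar> \<le> d"
    and cdfU: "\<And>j. 1 \<le> j \<Longrightarrow> j \<le> m \<Longrightarrow> measure U {0..real j / real m} = real j / real m"
  shows "levy_prokhorov01 M U \<le> e"
proof -
  interpret M: finite_measure M by (rule fM)
  interpret U: finite_measure U by (rule fU)
  have mpos: "real m > 0" using m by simp
  define C where "C = (\<lambda>j::nat. if j = 0 then {} else {0..real j / real m})"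
  define J where "J = (\<lambda>i. C (Suc i) - C i)"
  have Cb: "\<And>j. C j \<in> sets borel" by (simp add: C_def)
  have CM: "\<And>j. C j \<in> sets M" and CU: "\<And>j. C j \<in> sets U" using Cb sM sU by auto
  have Cmono: "\<And>j j'. j \<le> j' \<Longrightarrow> C j \<subseteq> C j'"
    using mpos by (auto simp: C_def divide_right_mono)
  have JM: "\<And>i. J i \<in> sets M" and JU: "\<And>i. J i \<in> sets U" using CM CU by (auto simp: J_def)
  have Cerr: "\<bar>measure M (C j) - measure U (C j)\<bar> \<le> d" if "j \<le> m" for j
  proof (cases "j = 0")
    case True then show ?thesis using d0 by (simp add: C_def)
  next
    case False
    then show ?thesis using cdfM[of j] cdfU[of j] that by (simp add: C_def)
  qed
  have Jerr: "\<bar>measure M (J i) - measure U (J i)\<bar> \<le> 2 * d" if "i < m" for i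
  proof -
    have "measure M (J i) = measure M (C (Suc i)) - measure M (C i)"
      unfolding J_def by (rule M.finite_measure_Diff[OF CM CM Cmono]) simp
    moreover have "measure U (J i) = measure U (C (Suc i)) - measure U (C i)"
      unfolding J_def by (rule U.finite_measure_Diff[OF CU CU Cmono]) simp
    ultimately show ?thesis using Cerr[of i] Cerr[of "Suc i"] that by (simp add: abs_le_iff)
  qed
  have Jint: "real i / real m \<le> x \<and> x \<le> real (Suc i) / real m \<and> 0 \<le> x \<and> x \<le> 1"
    if "x \<in> J i" "i < m" for x i
  proof -
    have a: "0 \<le> x" "x \<le> real (Suc i) / real m" using that by (auto simp: J_def C_def)
    have "real (Suc i) / real m \<le> 1" using that mpos by (simp add: divide_simps)
    moreover have "real i / real m \<le> x"
    proof (cases "i = 0")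
      case True then show ?thesis using a by simp
    next
      case False then show ?thesis using that a by (auto simp: J_def C_def)
    qed
    ultimately show ?thesis using a by simp
  qed
  have disj: "disjoint_family_on J S" for S
    unfolding disjoint_family_on_def
  proof (intro ballI impI)
    fix i i' assume "i \<in> S" "i' \<in> S" "i \<noteq> i'"
    { fix i i' :: nat assume "i < i'"
      then have "C (Suc i) \<subseteq> C i'" by (intro Cmono) simp
      then have "J i \<inter> J i' = {}" by (auto simp: J_def) }
    then show "J i \<inter> J i' = {}" using \<open>i \<noteq> i'\<close> by (metis Int_commute linorder_neqE_nat)
  qed
  have cover: "x \<in> (\<Union>i<m. J i)" if "0 \<le> x" "x \<le> 1" for x
  proof -
    have Cm: "x \<in> C m" using that m by (simp add: C_def)
    define j where "j = (LEAST j. x \<in> C j)"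
    have xj: "x \<in> C j" unfolding j_def by (rule LeastI[of _ m]) (rule Cm)
    have jm: "j \<le> m" unfolding j_def by (rule Least_le) (rule Cm)
    have j0: "j \<noteq> 0" using xj by (cases "j = 0") (auto simp: C_def)
    have "x \<notin> C (j - 1)"
    proof
      assume "x \<in> C (j - 1)"
      then have "j \<le> j - 1" unfolding j_def by (rule Least_le)
      then show False using j0 by simp
    qed
    then have "x \<in> J (j - 1)" using xj j0 by (simp add: J_def)
    moreover have "j - 1 < m" using jm j0 by simp
    ultimately show ?thesis by blast
  qed
  have main: "measure M A \<le> measure U (eps_nbhd01 e A) + e \<and> measure U A \<le> measure M (eps_nbhd01 e A) + e"
    if A: "A \<in> sets borel" "A \<subseteq> {0..1}" for A
  proof -
    define K where "K = {i\<in>{..<m}. A \<inter> J i \<noteq> {}}"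
    define W where "W = (\<Union>i\<in>K. J i)"
    have Kfin: "finite K" and Kcard: "card K \<le> m" unfolding K_def
      by (auto intro: finite_subset card_mono[of "{..<m}", simplified])
    have AW: "A \<subseteq> W"
    proof
      fix a assume "a \<in> A"
      then have "0 \<le> a" "a \<le> 1" using A by auto
      then obtain i where "i < m" "a \<in> J i" using cover by blast
      then show "a \<in> W" using \<open>a \<in> A\<close> by (auto simp: W_def K_def)
    qed
    have WE: "W \<subseteq> eps_nbhd01 e A"
    proof
      fix x assume "x \<in> W"
      then obtain i where i: "i \<in> K" "x \<in> J i" by (auto simp: W_def)
      then obtain a where a: "a \<in> A" "a \<in> J i" and im: "i < m" by (auto simp: K_def)
      have xi: "real i / real m \<le> x \<and> x \<le> real (Suc i) / real m \<and> 0 \<le> x \<and> x \<le> 1" by (rule Jint[OF i(2) im])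
      have ai: "real i / real m \<le> a \<and> a \<le> real (Suc i) / real m" using Jint[OF a(2) im] by simp
      have "real (Suc i) / real m - real i / real m = 1 / real m" using mpos by (simp add: divide_simps)
      then have "dist x a \<le> 1 / real m" using xi ai by (simp add: dist_real_def abs_le_iff)
      then have "dist x a < e" using hm by simp
      then show "x \<in> eps_nbhd01 e A" using xi a by (auto simp: eps_nbhd01_def)
    qed
    have EM: "eps_nbhd01 e A \<in> sets M" and EU: "eps_nbhd01 e A \<in> sets U" using eps_nbhd_borel sM sU by auto
    have WM: "measure M W = (\<Sum>i\<in>K. measure M (J i))"
      unfolding W_def by (rule M.finite_measure_finite_Union[OF Kfin _ disj]) (use JM in auto)
    have WU: "measure U W = (\<Sum>i\<in>K. measure U (J i))"
      unfolding W_def by (rule U.finite_measure_finite_Union[OF Kfin _ disj]) (use JU in auto)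
    have Wsets: "W \<in> sets M" "W \<in> sets U" unfolding W_def using Kfin JM JU by auto
    have err: "real (card K) * (2 * d) \<le> e"
    proof -
      have "real (card K) * (2 * d) \<le> real m * (2 * d)" using Kcard d0 by (intro mult_right_mono) auto
      then show ?thesis using dlt by (simp add: algebra_simps)
    qed
    have s1: "(\<Sum>i\<in>K. measure M (J i)) \<le> (\<Sum>i\<in>K. measure U (J i) + 2 * d)"
    proof (rule sum_mono)
      fix i assume "i \<in> K"
      then have "i < m" by (simp add: K_def)
      from Jerr[OF this] show "measure M (J i) \<le> measure U (J i) + 2 * d" by (simp add: abs_le_iff)
    qed
    have s2: "(\<Sum>i\<in>K. measure U (J i)) \<le> (\<Sum>i\<in>K. measure M (J i) + 2 * d)"
    proof (rule sum_mono)
      fix i assume "i \<in> K"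
      then have "i < m" by (simp add: K_def)
      from Jerr[OF this] show "measure U (J i) \<le> measure M (J i) + 2 * d" by (simp add: abs_le_iff)
    qed
    have "measure M A \<le> measure M W" by (rule M.finite_measure_mono[OF AW Wsets(1)])
    also have "\<dots> \<le> measure U W + real (card K) * (2 * d)" using WM WU s1 by (simp add: sum.distrib)
    also have "\<dots> \<le> measure U (eps_nbhd01 e A) + e" using U.finite_measure_mono[OF WE EU] err by simp
    finally have r1: "measure M A \<le> measure U (eps_nbhd01 e A) + e" .
    have "measure U A \<le> measure U W" by (rule U.finite_measure_mono[OF AW Wsets(2)])
    also have "\<dots> \<le> measure M W + real (card K) * (2 * d)" using WM WU s2 by (simp add: sum.distrib)
    also have "\<dots> \<le> measure M (eps_nbhd01 e A) + e" using M.finite_measure_mono[OF WE EM] err by simp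
    finally have r2: "measure U A \<le> measure M (eps_nbhd01 e A) + e" .
    show ?thesis using r1 r2 by simp
  qed
  let ?S = "{e. e > 0 \<and> (\<forall>A \<in> sets borel. A \<subseteq> {0..1} \<longrightarrow>
          measure M A \<le> measure U (eps_nbhd01 e A) + e \<and>
          measure U A \<le> measure M (eps_nbhd01 e A) + e)}"
  have "e \<in> ?S" using e main by auto
  moreover have "bdd_below ?S" by (rule bdd_belowI[of _ 0]) auto
  ultimately show ?thesis unfolding levy_prokhorov01_def by (rule cInf_lower)
qed



theorem proposition23:
  fixes \<epsilon> :: real
  assumes "\<epsilon> > 0"
  shows "\<exists>n0. \<forall>n \<ge> n0. \<forall>lam. is_composition n lam \<longrightarrow>
           levy_prokhorov01 (xi1_law lam) unif01 \<le> \<epsilon>"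
proof -
  define m where "m = nat \<lceil>2 / \<epsilon>\<rceil>"
  have m2: "real m \<ge> 2 / \<epsilon>" unfolding m_def by linarith
  have epos: "2 / \<epsilon> > 0" using assms by simp
  have m1: "1 \<le> m" using m2 epos by linarith
  have mpos: "real m > 0" using m1 by simp
  have hm: "1 / real m < \<epsilon>"
  proof -
    have "1 / real m \<le> 1 / (2 / \<epsilon>)" using m2 epos mpos assms by (intro divide_left_mono) (auto intro: mult_pos_pos)
    also have "\<dots> = \<epsilon> / 2" by simp
    finally show ?thesis using assms by simp
  qed
  define n0 where "n0 = max 2 (nat \<lceil>2 * real m / \<epsilon>\<rceil>)"
  show ?thesis
  proof (intro exI[of _ n0] allI impI)
    fix n lam assume n: "n0 \<le> n" and comp: "is_composition n lam"
    have n2: "n \<ge> 2" using n by (simp add: n0_def)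
    have npos: "real n > 0" using n2 by simp
    have nb: "real n \<ge> 2 * real m / \<epsilon>" using n unfolding n0_def by linarith
    have dlt: "2 * real m * (1 / real n) \<le> \<epsilon>"
    proof -
      have "2 * real m \<le> \<epsilon> * real n" using nb assms by (simp add: divide_le_eq mult.commute)
      then show ?thesis using npos by (simp add: divide_le_eq mult.commute)
    qed
    show "levy_prokhorov01 (xi1_law lam) unif01 \<le> \<epsilon>"
    proof (rule lp_from_blocks[OF _ _ xi1_sets unif01_sets assms m1 hm _ dlt])
      show "finite_measure (xi1_law lam)" using xi1_subprob by (simp add: subprob_space_def)
      show "finite_measure unif01" using unif01_prob by (simp add: prob_space_def)
      show "0 \<le> 1 / real n" by simp
      fix j assume j: "1 \<le> j" "j \<le> m"
      have t: "0 \<le> real j / real m" "real j / real m \<le> 1" using j mpos by (auto simp: divide_simps)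
      show "\<bar>measure (xi1_law lam) {0..real j / real m} - real j / real m\<bar> \<le> 1 / real n"
        by (rule xi1_cdf[OF comp n2 t])
      have "{0..1} \<inter> {0..real j / real m} = {0..real j / real m}" using t by auto
      then show "measure unif01 {0..real j / real m} = real j / real m"
        using t by (simp add: unif01_measure)
    qed
  qed
qed


end
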